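(* Let $X\in\{0,1\}$ be binary and let $Y_0$ be a real random variable such that: for each $x'\in\{0,1\}$, the conditional cdf of $Y_0$ given $X=x'$ is strictly increasing and continuous on its support; for each $x'\in\{0,1\}$ the support of $Y_0$ given $X=x'$ equals the support of $Y_0$, which is $[\underline{y}_0,\overline{y}_0]$ with $-\infty\le\underline{y}_0<\overline{y}_0\le\infty$; and $\Pr(X=x')>0$ for $x'\in\{0,1\}$. Let $\mathcal{T}=[a,b]\subseteq[\underline{y}_0,\overline{y}_0]$. If $Y_0$ is $\mathcal{T}$-independent of $X$, then \[ \Pr(X=1\mid Y_0=y_0)=\Pr(X=1) \] for almost all $y_0\in\mathcal{T}$.
   Context: $Y_0$ is $\mathcal{T}$-independent of $X$ if $F_{Y_0\mid X}(\tau\mid 0)=F_{Y_0\mid X}(\tau\mid 1)$ for all $\tau\in\mathcal{T}$, where $F_{Y_0\mid X}(\cdot\mid x')$ is the conditional cdf of $Y_0$ given $X=x'$. *)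

theory Defs
  imports "HOL-Probability.Probability"
begin

definition cond_cdf :: "'a measure \<Rightarrow> ('a \<Rightarrow> real) \<Rightarrow> ('a \<Rightarrow> real) \<Rightarrow> real \<Rightarrow> real \<Rightarrow> real" where
  "cond_cdf M Y0 X x' \<tau> =
     measure M {\<omega> \<in> space M. Y0 \<omega> \<le> \<tau> \<and> X \<omega> = x'} / measure M {\<omega> \<in> space M. X \<omega> = x'}"

text \<open>Support of the distribution of Y0 (smallest closed set of full probability).\<close>
definition support :: "'a measure \<Rightarrow> ('a \<Rightarrow> real) \<Rightarrow> real set" where
  "support M Y0 = {y. \<forall>e>0. measure M {\<omega> \<in> space M. Y0 \<omega> \<in> ball y e} > 0}"

definition cond_support :: "'a measure \<Rightarrow> ('a \<Rightarrow> real) \<Rightarrow> ('a \<Rightarrow> real) \<Rightarrow> real \<Rightarrow> real set" where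
  "cond_support M Y0 X x' =
     {y. \<forall>e>0. measure M {\<omega> \<in> space M. Y0 \<omega> \<in> ball y e \<and> X \<omega> = x'} > 0}"

definition T_independent :: "'a measure \<Rightarrow> ('a \<Rightarrow> real) \<Rightarrow> ('a \<Rightarrow> real) \<Rightarrow> real set \<Rightarrow> bool" where
  "T_independent M Y0 X T \<longleftrightarrow> (\<forall>\<tau>\<in>T. cond_cdf M Y0 X 0 \<tau> = cond_cdf M Y0 X 1 \<tau>)"

text \<open>g is a version of y \<mapsto> Pr(A | Y = y): a Borel function, integrable w.r.t. the law of Y,
  with P(A \<inter> {Y \<in> B}) = \<integral>_B g d(law of Y) for every Borel B.\<close>
definition is_cond_prob_given :: "'a measure \<Rightarrow> ('a \<Rightarrow> real) \<Rightarrow> 'a set \<Rightarrow> (real \<Rightarrow> real) \<Rightarrow> bool" where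
  "is_cond_prob_given M Y A g \<longleftrightarrow>
     g \<in> borel_measurable borel \<and> integrable (distr M borel Y) g \<and>
     (\<forall>B\<in>sets borel. measure M (A \<inter> {\<omega> \<in> space M. Y \<omega> \<in> B}) =
        (\<integral>y. indicator B y * g y \<partial>(distr M borel Y)))"

end

theory Submission
  imports Defs
begin

lemma ae_zero_from_integrals:
  fixes N :: "real measure" and h :: "real \<Rightarrow> real"
  assumes sN: "sets N = sets borel" and hm: "h \<in> borel_measurable borel" and hi: "integrable N h"
    and z: "\<And>B. B \<in> sets borel \<Longrightarrow> (\<integral>y. indicator B y * h y \<partial>N) = 0"
  shows "AE y in N. h y = 0"
proof -
  have hmN: "h \<in> borel_measurable N" using hm sN by (simp add: measurable_def)
  define Bp where "Bp = {y. h y > 0}"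
  define Bn where "Bn = {y. h y < 0}"
  have Bp: "Bp \<in> sets borel" unfolding Bp_def using hm by measurable
  have Bn: "Bn \<in> sets borel" unfolding Bn_def using hm by measurable
  have "AE y in N. indicator Bp y * h y = 0"
  proof (subst integral_nonneg_eq_0_iff_AE[symmetric])
    show "integrable N (\<lambda>y. indicator Bp y * h y)"
      using integrable_real_mult_indicator[of Bp N h] Bp sN hi by (simp add: mult.commute)
    show "AE y in N. 0 \<le> indicator Bp y * h y" by (auto simp: Bp_def indicator_def)
    show "(\<integral>y. indicator Bp y * h y \<partial>N) = 0" using z[OF Bp] .
  qed
  moreover have "AE y in N. indicator Bn y * (- h y) = 0"
  proof (subst integral_nonneg_eq_0_iff_AE[symmetric])
    show "integrable N (\<lambda>y. indicator Bn y * (- h y))"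
      using integrable_real_mult_indicator[of Bn N "\<lambda>y. - h y"] Bn sN hi by (simp add: mult.commute)
    show "AE y in N. 0 \<le> indicator Bn y * (- h y)" by (auto simp: Bn_def indicator_def)
    show "(\<integral>y. indicator Bn y * (- h y) \<partial>N) = 0" using z[OF Bn] by simp
  qed
  ultimately show ?thesis
    by eventually_elim (auto simp: Bp_def Bn_def indicator_def split: if_splits)
qed

theorem corollary4:
  fixes M :: "'a measure" and X Y0 :: "'a \<Rightarrow> real"
    and ylo yhi :: ereal and a b :: real and g :: "real \<Rightarrow> real"
  assumes "prob_space M"
    and "X \<in> borel_measurable M" and "Y0 \<in> borel_measurable M"
    and "\<forall>\<omega>\<in>space M. X \<omega> \<in> {0, 1}"
    and "\<forall>x'\<in>{0, 1}. measure M {\<omega> \<in> space M. X \<omega> = x'} > 0"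
    and "ylo < yhi"
    and "support M Y0 = {y. ylo \<le> ereal y \<and> ereal y \<le> yhi}"
    and "\<forall>x'\<in>{0, 1}. cond_support M Y0 X x' = support M Y0"
    and "\<forall>x'\<in>{0, 1}. strict_mono_on (support M Y0) (cond_cdf M Y0 X x')"
    and "\<forall>x'\<in>{0, 1}. continuous_on (support M Y0) (cond_cdf M Y0 X x')"
    and "{a..b} \<subseteq> support M Y0"
    and "T_independent M Y0 X {a..b}"
    and "is_cond_prob_given M Y0 {\<omega> \<in> space M. X \<omega> = 1} g"
  shows "AE y in distr M borel Y0. y \<in> {a..b} \<longrightarrow>
           g y = measure M {\<omega> \<in> space M. X \<omega> = 1}"
proof -
  interpret prob_space M by fact
  note Xm[measurable] = assms(2) and Ym[measurable] = assms(3)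
  define p where "p = measure M {\<omega> \<in> space M. X \<omega> = 1}"
  define q where "q = measure M {\<omega> \<in> space M. X \<omega> = 0}"
  have p0: "p > 0" and q0: "q > 0" using assms(5) by (auto simp: p_def q_def)
  have split: "measure M S = measure M {\<omega>\<in>S. X \<omega> = 0} + measure M {\<omega>\<in>S. X \<omega> = 1}"
    if S: "S \<in> sets M" for S
  proof -
    have "S = {\<omega>\<in>S. X \<omega> = 0} \<union> {\<omega>\<in>S. X \<omega> = 1}"
      using assms(4) sets.sets_into_space[OF S] by auto
    moreover have "{\<omega>\<in>S. X \<omega> = 0} \<in> sets M" "{\<omega>\<in>S. X \<omega> = 1} \<in> sets M"
      using S by measurable
    moreover have "{\<omega>\<in>S. X \<omega> = 0} \<inter> {\<omega>\<in>S. X \<omega> = 1} = {}" by auto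
    ultimately show ?thesis
      using finite_measure_Union by metis
  qed
  have pq: "q + p = 1"
    using split[of "space M"] prob_space by (simp add: p_def q_def)
  define F where "F x t = measure M {\<omega> \<in> space M. Y0 \<omega> \<le> t \<and> X \<omega> = x}" for x t
  define Ft where "Ft t = measure M {\<omega> \<in> space M. Y0 \<omega> \<le> t}" for t
  have Fsplit: "Ft t = F 0 t + F 1 t" for t
  proof -
    have S: "{\<omega> \<in> space M. Y0 \<omega> \<le> t} \<in> sets M" by measurable
    have e: "\<And>x. {\<omega>\<in>{\<omega> \<in> space M. Y0 \<omega> \<le> t}. X \<omega> = x} = {\<omega> \<in> space M. Y0 \<omega> \<le> t \<and> X \<omega> = x}" by auto
    show ?thesis using split[OF S] unfolding e Ft_def F_def .
  qed
  have key: "F 1 t = p * Ft t" if t: "t \<in> {a..b}" for t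
  proof -
    have "F 0 t / q = F 1 t / p"
      using assms(12) t unfolding T_independent_def cond_cdf_def F_def p_def q_def by auto
    then have eq: "p * F 0 t = q * F 1 t" using p0 q0 by (simp add: field_simps)
    have "p * Ft t = p * F 0 t + p * F 1 t" by (simp add: Fsplit distrib_left)
    also have "\<dots> = (q + p) * F 1 t" using eq by (simp add: distrib_right)
    finally show ?thesis using pq by simp
  qed
  define G where "G x = measure M {\<omega> \<in> space M. Y0 \<omega> < a \<and> X \<omega> = x}" for x
  define Gt where "Gt = measure M {\<omega> \<in> space M. Y0 \<omega> < a}"
  have Gsplit: "Gt = G 0 + G 1"
  proof -
    have S: "{\<omega> \<in> space M. Y0 \<omega> < a} \<in> sets M" by measurable
    have e: "\<And>x. {\<omega>\<in>{\<omega> \<in> space M. Y0 \<omega> < a}. X \<omega> = x} = {\<omega> \<in> space M. Y0 \<omega> < a \<and> X \<omega> = x}" by auto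
    show ?thesis using split[OF S] unfolding e Gt_def G_def .
  qed
  have Gkey: "G 1 = p * Gt" if ab: "a \<le> b"
  proof -
    have aS: "a \<in> support M Y0" using assms(11) ab by auto
    hence ylo_a: "ylo \<le> ereal a" and a_hi: "ereal a \<le> yhi" using assms(7) by auto
    have Gsets: "{\<omega> \<in> space M. Y0 \<omega> < a \<and> X \<omega> = x} \<in> sets M" for x by measurable
    have Fsets: "{\<omega> \<in> space M. Y0 \<omega> \<le> t \<and> X \<omega> = x} \<in> sets M" for x t by measurable
    show ?thesis
    proof (cases "ylo < ereal a")
      case True
      obtain r where r1: "ylo < ereal r" and r2: "ereal r < ereal a" using ereal_dense2[OF True] by blast
      have ra: "r < a" using r2 by simp
      have sub: "{r..a} \<subseteq> support M Y0"
      proof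
        fix t assume "t \<in> {r..a}"
        then have "ylo \<le> ereal t" "ereal t \<le> yhi" using r1 a_hi
          by (auto intro: order.trans[of _ "ereal a"] order.trans[of _ "ereal r"])
        then show "t \<in> support M Y0" using assms(7) by simp
      qed
      have Fa: "G x = F x a" if x: "x \<in> {0,1}" for x
      proof -
        define Px where "Px = measure M {\<omega> \<in> space M. X \<omega> = x}"
        have Px0: "Px > 0" using assms(5) x by (auto simp: Px_def)
        have cont: "continuous_on {r..a} (cond_cdf M Y0 X x)"
          using assms(10) x sub continuous_on_subset by blast
        have lim: "(cond_cdf M Y0 X x \<longlongrightarrow> cond_cdf M Y0 X x a) (at_left a)"
          by (rule continuous_on_Icc_at_leftD[OF cont ra])
        have cc: "cond_cdf M Y0 X x = (\<lambda>t. F x t / Px)"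
          by (auto simp: cond_cdf_def F_def Px_def fun_eq_iff)
        have "((\<lambda>t. F x t / Px * Px) \<longlongrightarrow> F x a / Px * Px) (at_left a)"
          using lim unfolding cc by (rule tendsto_mult[OF _ tendsto_const])
        moreover have "(\<lambda>t. F x t / Px * Px) = F x" using Px0 by (auto simp: fun_eq_iff)
        moreover have "F x a / Px * Px = F x a" using Px0 by simp
        ultimately have lim2: "(F x \<longlongrightarrow> F x a) (at_left a)" by simp
        have ev: "eventually (\<lambda>t. F x t \<le> G x) (at_left a)"
          unfolding eventually_at_left[OF ra]
        proof (intro exI[of _ r] conjI allI impI ra)
          fix t assume "r < t" "t < a"
          then show "F x t \<le> G x" unfolding F_def G_def
            by (intro finite_measure_mono Gsets) auto
        qed
        have "F x a \<le> G x" by (rule tendsto_upperbound[OF lim2 ev]) simp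
        moreover have "G x \<le> F x a" unfolding F_def G_def
          by (intro finite_measure_mono Fsets) auto
        ultimately show ?thesis by simp
      qed
      have "G 1 = F 1 a" using Fa by simp
      also have "\<dots> = p * Ft a" using key ab by simp
      also have "\<dots> = p * Gt" using Fsplit Gsplit Fa by simp
      finally show ?thesis .
    next
      case False
      then have ya: "ylo = ereal a" using ylo_a by simp
      define Fam where "Fam = {ball y e | y e. e > 0 \<and> measure M {\<omega>\<in>space M. Y0 \<omega> \<in> ball y e} = 0}"
      have cov: "{..<a} \<subseteq> \<Union>Fam"
      proof
        fix y assume "y \<in> {..<a}"
        then have "y \<notin> support M Y0" using assms(7) ya by auto
        then obtain e where e: "e > 0" "\<not> measure M {\<omega>\<in>space M. Y0 \<omega> \<in> ball y e} > 0"
          unfolding support_def by auto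
        then have "measure M {\<omega>\<in>space M. Y0 \<omega> \<in> ball y e} = 0"
          using measure_nonneg[of M "{\<omega>\<in>space M. Y0 \<omega> \<in> ball y e}"] by linarith
        then have "ball y e \<in> Fam" using e unfolding Fam_def by blast
        moreover have "y \<in> ball y e" using e by simp
        ultimately show "y \<in> \<Union>Fam" by blast
      qed
      obtain Fam' where F1: "Fam' \<subseteq> Fam" and F2: "countable Fam'" and F3: "\<Union>Fam' = \<Union>Fam"
        using Lindelof[of Fam] unfolding Fam_def by auto
      have null: "(\<Union>B\<in>Fam'. Y0 -` B \<inter> space M) \<in> null_sets M"
      proof (rule null_sets_UN'[OF F2])
        fix B assume "B \<in> Fam'"
        then obtain y e where B: "B = ball y e" "measure M {\<omega>\<in>space M. Y0 \<omega> \<in> ball y e} = 0"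
          using F1 unfolding Fam_def by auto
        have s: "Y0 -` B \<inter> space M \<in> sets M" using B by (intro measurable_sets[OF Ym]) auto
        have "{\<omega>\<in>space M. Y0 \<omega> \<in> ball y e} = Y0 -` B \<inter> space M" using B by auto
        then have "emeasure M (Y0 -` B \<inter> space M) = 0" using B s by (simp add: emeasure_eq_measure)
        then show "Y0 -` B \<inter> space M \<in> null_sets M" using s by (intro null_setsI)
      qed
      have "{\<omega> \<in> space M. Y0 \<omega> < a} \<subseteq> (\<Union>B\<in>Fam'. Y0 -` B \<inter> space M)"
      proof
        fix w assume w: "w \<in> {\<omega> \<in> space M. Y0 \<omega> < a}"
        then have "Y0 w \<in> \<Union>Fam'" using cov F3 by auto
        then show "w \<in> (\<Union>B\<in>Fam'. Y0 -` B \<inter> space M)" using w by auto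
      qed
      moreover have "{\<omega> \<in> space M. Y0 \<omega> < a} \<in> sets M" by measurable
      ultimately have "{\<omega> \<in> space M. Y0 \<omega> < a} \<in> null_sets M"
        using null null_sets_subset by blast
      then have Gt0: "Gt = 0" unfolding Gt_def by (simp add: measure_def null_setsD1)
      have "G 1 \<le> Gt" unfolding G_def Gt_def by (intro finite_measure_mono) (auto simp: Gt_def)
      then have "G 1 = 0" using Gt0 measure_nonneg[of M] unfolding G_def by (meson order_antisym)
      then show ?thesis using Gt0 by simp
    qed
  qed
  show ?thesis
  proof (cases "a \<le> b")
    case False
    then show ?thesis by (intro AE_I2) simp
  next
    case ab: True
    note Gk = Gkey[OF ab]
    define S where "S = {\<omega>\<in>space M. X \<omega> = 1 \<and> Y0 \<omega> \<in> {a..b}}"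
    define T where "T = {\<omega>\<in>space M. Y0 \<omega> \<in> {a..b}}"
    have Ss[measurable]: "S \<in> sets M" unfolding S_def by measurable
    have Ts[measurable]: "T \<in> sets M" unfolding T_def by measurable
    define L1 where "L1 = distr (density M (indicator S)) borel Y0"
    define L2 where "L2 = scale_measure (ennreal p) (distr (density M (indicator T)) borel Y0)"
    have Yd: "Y0 \<in> measurable (density M f) borel" for f
      using Ym by (simp only: measurable_density_eq1)
    have e1: "emeasure L1 C = ennreal (measure M {\<omega>\<in>space M. X \<omega> = 1 \<and> Y0 \<omega> \<in> C \<inter> {a..b}})"
      if C: "C \<in> sets borel" for C
    proof -
      have CY: "Y0 -` C \<inter> space M \<in> sets M" using measurable_sets[OF Ym C] .
      have "emeasure L1 C = emeasure (density M (indicator S)) (Y0 -` C \<inter> space M)"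
        unfolding L1_def using emeasure_distr[OF Yd C] by simp
      also have "\<dots> = emeasure M (S \<inter> (Y0 -` C \<inter> space M))"
        by (rule emeasure_restricted[OF Ss CY])
      also have "S \<inter> (Y0 -` C \<inter> space M) = {\<omega>\<in>space M. X \<omega> = 1 \<and> Y0 \<omega> \<in> C \<inter> {a..b}}"
        unfolding S_def by auto
      finally show ?thesis by (simp add: emeasure_eq_measure)
    qed
    have e2: "emeasure L2 C = ennreal p * ennreal (measure M {\<omega>\<in>space M. Y0 \<omega> \<in> C \<inter> {a..b}})"
      if C: "C \<in> sets borel" for C
    proof -
      have CY: "Y0 -` C \<inter> space M \<in> sets M" using measurable_sets[OF Ym C] .
      have "emeasure L2 C = ennreal p * emeasure (density M (indicator T)) (Y0 -` C \<inter> space M)"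
        unfolding L2_def using emeasure_distr[OF Yd C] by simp
      also have "emeasure (density M (indicator T)) (Y0 -` C \<inter> space M) = emeasure M (T \<inter> (Y0 -` C \<inter> space M))"
        by (rule emeasure_restricted[OF Ts CY])
      also have "T \<inter> (Y0 -` C \<inter> space M) = {\<omega>\<in>space M. Y0 \<omega> \<in> C \<inter> {a..b}}"
        unfolding T_def by auto
      finally show ?thesis by (simp add: emeasure_eq_measure)
    qed
    have meq: "measure M {\<omega>\<in>space M. X \<omega> = 1 \<and> Y0 \<omega> \<in> {t<..} \<inter> {a..b}}
        = p * measure M {\<omega>\<in>space M. Y0 \<omega> \<in> {t<..} \<inter> {a..b}}" for t
    proof -
      have s1[measurable]: "{\<omega> \<in> space M. Y0 \<omega> \<le> s \<and> X \<omega> = x} \<in> sets M" for s x by measurable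
      have s2[measurable]: "{\<omega> \<in> space M. Y0 \<omega> < a \<and> X \<omega> = x} \<in> sets M" for x by measurable
      have s3[measurable]: "{\<omega> \<in> space M. Y0 \<omega> \<le> s} \<in> sets M" for s by measurable
      have s4[measurable]: "{\<omega> \<in> space M. Y0 \<omega> < a} \<in> sets M" by measurable
      consider "b \<le> t" | "a \<le> t" "t < b" | "t < a" by linarith
      then show ?thesis
      proof cases
        case 1
        then have "{\<omega>\<in>space M. X \<omega> = 1 \<and> Y0 \<omega> \<in> {t<..} \<inter> {a..b}} = {}"
          "{\<omega>\<in>space M. Y0 \<omega> \<in> {t<..} \<inter> {a..b}} = {}" by auto
        note e = this
        show ?thesis unfolding e by simp
      next
        case 2
        have "{\<omega>\<in>space M. X \<omega> = 1 \<and> Y0 \<omega> \<in> {t<..} \<inter> {a..b}} =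
          {\<omega> \<in> space M. Y0 \<omega> \<le> b \<and> X \<omega> = 1} - {\<omega> \<in> space M. Y0 \<omega> \<le> t \<and> X \<omega> = 1}"
          using 2 by auto
        then have m1: "measure M {\<omega>\<in>space M. X \<omega> = 1 \<and> Y0 \<omega> \<in> {t<..} \<inter> {a..b}} = F 1 b - F 1 t"
          unfolding F_def using 2 by (simp add: finite_measure_Diff subset_eq)
        have "{\<omega>\<in>space M. Y0 \<omega> \<in> {t<..} \<inter> {a..b}} =
          {\<omega> \<in> space M. Y0 \<omega> \<le> b} - {\<omega> \<in> space M. Y0 \<omega> \<le> t}"
          using 2 by auto
        then have m2: "measure M {\<omega>\<in>space M. Y0 \<omega> \<in> {t<..} \<inter> {a..b}} = Ft b - Ft t"
          unfolding Ft_def using 2 by (simp add: finite_measure_Diff subset_eq)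
        show ?thesis unfolding m1 m2 using key[of b] key[of t] 2 ab by (simp add: right_diff_distrib)
      next
        case 3
        have "{\<omega>\<in>space M. X \<omega> = 1 \<and> Y0 \<omega> \<in> {t<..} \<inter> {a..b}} =
          {\<omega> \<in> space M. Y0 \<omega> \<le> b \<and> X \<omega> = 1} - {\<omega> \<in> space M. Y0 \<omega> < a \<and> X \<omega> = 1}"
          using 3 by auto
        then have m1: "measure M {\<omega>\<in>space M. X \<omega> = 1 \<and> Y0 \<omega> \<in> {t<..} \<inter> {a..b}} = F 1 b - G 1"
          unfolding F_def G_def using 3 ab by (simp add: finite_measure_Diff subset_eq)
        have "{\<omega>\<in>space M. Y0 \<omega> \<in> {t<..} \<inter> {a..b}} =
          {\<omega> \<in> space M. Y0 \<omega> \<le> b} - {\<omega> \<in> space M. Y0 \<omega> < a}"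
          using 3 by auto
        then have m2: "measure M {\<omega>\<in>space M. Y0 \<omega> \<in> {t<..} \<inter> {a..b}} = Ft b - Gt"
          unfolding Ft_def Gt_def using 3 ab by (simp add: finite_measure_Diff subset_eq)
        show ?thesis unfolding m1 m2 using key[of b] Gk ab by (simp add: right_diff_distrib)
      qed
    qed
    have "L1 = L2"
    proof (rule measure_eqI_lessThan)
      show "sets L1 = sets borel" "sets L2 = sets borel" by (simp_all add: L1_def L2_def)
      show "emeasure L1 {x<..} < \<infinity>" for x using e1[of "{x<..}"] by simp
      show "emeasure L1 {x<..} = emeasure L2 {x<..}" for x
        using e1[of "{x<..}"] e2[of "{x<..}"] meq[of x] p0 by (simp add: ennreal_mult)
    qed
    then have ceq: "measure M {\<omega>\<in>space M. X \<omega> = 1 \<and> Y0 \<omega> \<in> C \<inter> {a..b}}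
        = p * measure M {\<omega>\<in>space M. Y0 \<omega> \<in> C \<inter> {a..b}}" if C: "C \<in> sets borel" for C
      using e1[OF C] e2[OF C] p0 by (simp add: ennreal_mult[symmetric])
    define N where "N = distr M borel Y0"
    interpret N: prob_space N unfolding N_def by (rule prob_space_distr) simp
    have gm: "g \<in> borel_measurable borel" and gi: "integrable N g"
      and gc: "\<And>B. B\<in>sets borel \<Longrightarrow> measure M ({\<omega> \<in> space M. X \<omega> = 1} \<inter> {\<omega> \<in> space M. Y0 \<omega> \<in> B}) =
        (\<integral>y. indicator B y * g y \<partial>N)"
      using assms(13) unfolding is_cond_prob_given_def N_def by auto
    have sN: "sets N = sets borel" by (simp add: N_def)
    define h where "h y = indicator {a..b} y * (g y - p)" for y
    have "AE y in N. h y = 0"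
    proof (rule ae_zero_from_integrals[OF sN])
      show "h \<in> borel_measurable borel" unfolding h_def using gm by measurable
      show "integrable N h" unfolding h_def
        using integrable_real_mult_indicator[of "{a..b}" N "\<lambda>y. g y - p"] gi sN
        by (simp add: mult.commute)
      fix B :: "real set" assume B: "B \<in> sets borel"
      have BI: "B \<inter> {a..b} \<in> sets borel" using B by simp
      have "(\<lambda>y. indicator B y * h y) = (\<lambda>y. indicator (B \<inter> {a..b}) y * g y - p * indicator (B \<inter> {a..b}) y)"
        unfolding h_def by (auto simp: indicator_def fun_eq_iff)
      moreover have int1: "integrable N (\<lambda>y. indicator (B \<inter> {a..b}) y * g y)"
        using integrable_real_mult_indicator[of "B \<inter> {a..b}" N g] BI gi sN
        by (simp add: mult.commute)
      moreover have int2: "integrable N (\<lambda>y. p * indicator (B \<inter> {a..b}) y)"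
        using BI sN by (intro integrable_mult_right integrable_real_indicator) (auto simp: N.emeasure_eq_measure)
      ultimately have "(\<integral>y. indicator B y * h y \<partial>N) = (\<integral>y. indicator (B \<inter> {a..b}) y * g y \<partial>N) - (\<integral>y. p * indicator (B \<inter> {a..b}) y \<partial>N)"
        by (simp only: Bochner_Integration.integral_diff)
      also have "(\<integral>y. p * indicator (B \<inter> {a..b}) y \<partial>N) = p * measure N (B \<inter> {a..b})"
        using BI sN by (simp add: N.emeasure_eq_measure)
      also have "\<dots> = p * measure M {\<omega>\<in>space M. Y0 \<omega> \<in> B \<inter> {a..b}}"
        unfolding N_def using BI by (simp add: measure_distr vimage_def Int_def conj_commute)
      also have "(\<integral>y. indicator (B \<inter> {a..b}) y * g y \<partial>N) = measure M {\<omega>\<in>space M. X \<omega> = 1 \<and> Y0 \<omega> \<in> B \<inter> {a..b}}"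
      proof -
        have "{\<omega> \<in> space M. X \<omega> = 1} \<inter> {\<omega> \<in> space M. Y0 \<omega> \<in> B \<inter> {a..b}} = {\<omega>\<in>space M. X \<omega> = 1 \<and> Y0 \<omega> \<in> B \<inter> {a..b}}"
          by auto
        then show ?thesis using gc[OF BI] by simp
      qed
      finally show "(\<integral>y. indicator B y * h y \<partial>N) = 0" using ceq[OF B] by simp
    qed
    then show ?thesis unfolding N_def[symmetric] p_def[symmetric]
      by eventually_elim (auto simp: h_def)
  qed
qed

end
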